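(* Let $K,N,J\ge 1$ be integers with $N\le K$. Let $N_0>0$, and for $k=1,\dots,K$ let $h_k^{db}\in\mathbb{C}$ and $P_k'\ge 0$; set $\tilde N_k=N_0+|h_k^{db}|^2P_k'$ and $\bm{K}_{\tilde{\bm n}}=\mathrm{diag}\{\tilde N_1,\dots,\tilde N_K\}$. For $j=1,\dots,J$ let $h^{cb}_{j1},\dots,h^{cb}_{jK}\in\mathbb{C}\setminus\{0\}$ and $\bm H_j=\mathrm{diag}\{h^{cb}_{j1},\dots,h^{cb}_{jK}\}$; let $\bm M_{j1},\bm M_{j2}\in\mathbb{C}^{K\times N}$ and let $\bm A_{j1},\bm A_{j2}$ be $N\times N$ real diagonal matrices with nonnegative diagonal entries; set $$\bm K_{\bm x_j}=\bm M_{j1}\bm A_{j1}\bm M_{j1}^*+\bm M_{j2}\bm A_{j2}\bm M_{j2}^*,\qquad \bm H=(\bm H_1,\dots,\bm H_J),\qquad \bm K_{\bm x}=\mathrm{diag}\{\bm K_{\bm x_1},\dots,\bm K_{\bm x_J}\}$$ (block diagonal), and $\bm K_{\bm y}=\bm K_{\tilde{\bm n}}+\bm H\bm K_{\bm x}\bm H^*$. Define $$C_c=\log\det(\bm K_{\bm y})-\sum_{k=1}^K\log\tilde N_k,$$ and, writing $\lambda_K(\cdot)$ for the largest eigenvalue of a $K\times K$ Hermitian matrix, $$\tau_{K,j}=\lambda_K(\bm M_{j1}\bm A_{j1}\bm M_{j1}^* )+\lambda_K(\bm M_{j2}\bm A_{j2}\bm M_{j2}^* ).$$ Assume that $\bm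 K_{\tilde{\bm n}}$ and $\bm H\bm K_{\bm x}\bm H^*$ have no common eigenvector. Then $$C_c<\sum_{k=1}^{K}\log\left\{1+\frac{\sum_{j=1}^{J}\tau_{K,j}\cdot\max_{1\le k'\le K}|h^{cb}_{jk'}|^2}{N_0+|h_k^{db}|^2P_k'}\right\}.$$
   Context: This is the upper bound on the capacity of the cellular users in an uplink SCMA network coexisting with D2D pairs. The received signal is $\bm y=\sum_{j=1}^J\bm H_j\bm x_j+\tilde{\bm n}$, where $\bm x_j$ is the $K$-dimensional SCMA codeword of cellular user $j$ (zero-mean Gaussian with covariance $\bm K_{\bm x_j}$, obtained from an $N$-dimensional codeword via $\bm x_j=e^{i\theta_j}\bm V_j\bm M'\bm u_j$ with $\bm V_j\bm M'=(\bm M_{j1},\bm M_{j2})$ and $\bm u_j$ having covariance $\mathrm{diag}(\bm A_{j1},\bm A_{j2})$), and $\tilde{\bm n}\sim\mathcal{CN}(\bm 0,\bm K_{\tilde{\bm n}})$ is noise plus D2D interference; $C_c$ is the mutual information $I(\bm x;\bm y\mid\bm H)$ for Gaussian input. $\log$ denotes a logarithm to a fixed base greater than $1$. *)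

theory Defs
  imports "HOL-Analysis.Analysis"
begin

definition cadj :: "complex^'n^'m \<Rightarrow> complex^'m^'n" where
  "cadj A = (\<chi> i j. cnj (A $ j $ i))"

definition diagm :: "('n \<Rightarrow> 'a::zero) \<Rightarrow> 'a^'n^'n" where
  "diagm d = (\<chi> i j. if i = j then d i else 0)"

definition is_eigvec :: "complex^'n^'n \<Rightarrow> complex^'n \<Rightarrow> bool" where
  "is_eigvec A v \<longleftrightarrow> v \<noteq> 0 \<and> (\<exists>\<mu>. A *v v = \<mu> *s v)"

text \<open>Largest eigenvalue of a Hermitian matrix (whose eigenvalues are real).\<close>
definition lambda_max :: "complex^'n^'n \<Rightarrow> real" where
  "lambda_max A = Max {r::real. \<exists>v. v \<noteq> 0 \<and> A *v v = complex_of_real r *s v}"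

end

theory Submission
  imports Defs
begin


definition hip :: "complex^'n \<Rightarrow> complex^'n \<Rightarrow> complex" where
  "hip x y = (\<Sum>k\<in>UNIV. cnj (x$k) * y$k)"

definition herm :: "complex^'n^'n \<Rightarrow> bool" where
  "herm A \<longleftrightarrow> cadj A = A"

lemma hip_add_right: "hip x (y + z) = hip x y + hip x z"
  by (simp add: hip_def distrib_left sum.distrib)
lemma hip_add_left: "hip (x + y) z = hip x z + hip y z"
  by (simp add: hip_def distrib_right sum.distrib)
lemma hip_diff_right: "hip x (y - z) = hip x y - hip x z"
  by (simp add: hip_def right_diff_distrib sum_subtractf)
lemma hip_scale_right: "hip x (c *s y) = c * hip x y"
  by (simp add: hip_def sum_distrib_left algebra_simps)
lemma hip_scale_left: "hip (c *s x) y = cnj c * hip x y"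
  by (simp add: hip_def sum_distrib_left algebra_simps)
lemma hip_zero_right[simp]: "hip x 0 = 0" by (simp add: hip_def)
lemma hip_zero_left[simp]: "hip 0 x = 0" by (simp add: hip_def)
lemma hip_cnj: "cnj (hip x y) = hip y x"
  by (simp add: hip_def mult.commute)

lemma hip_self: "hip x x = complex_of_real ((norm x)^2)"
proof -
  have "(norm x)^2 = (\<Sum>k\<in>UNIV. (cmod (x$k))^2)"
    by (simp add: norm_vec_def L2_set_def sum_nonneg)
  then have "complex_of_real ((norm x)^2) = (\<Sum>k\<in>UNIV. complex_of_real ((cmod (x$k))^2))"
    by simp
  also have "\<dots> = hip x x" unfolding hip_def
    by (intro sum.cong refl) (simp only: complex_norm_square mult.commute)
  finally show ?thesis by simp
qed

lemma hip_self_Re: "Re (hip x x) = (norm x)^2" by (simp add: hip_self)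
lemma hip_self_eq0: "hip x x = 0 \<longleftrightarrow> x = 0" by (simp add: hip_self)

lemma cnj_mult_self: "cnj c * c = complex_of_real ((cmod c)^2)"
  by (metis complex_norm_square mult.commute of_real_power)

lemma hip_scale_self: "hip (c *s x) (c *s x) = complex_of_real ((cmod c)^2) * hip x x"
  by (metis hip_scale_left hip_scale_right mult.assoc cnj_mult_self)

lemma norm_smult: "norm (c *s (x::complex^'n)) = cmod c * norm x"
proof -
  have "(norm (c *s x))^2 = (cmod c * norm x)^2"
  proof -
    have "complex_of_real ((norm (c *s x))^2) = complex_of_real ((cmod c)^2) * complex_of_real ((norm x)^2)"
      using hip_scale_self[of c x] by (simp only: hip_self)
    also have "\<dots> = complex_of_real ((cmod c * norm x)^2)" by (simp add: power_mult_distrib)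
    finally show ?thesis by (simp only: of_real_eq_iff)
  qed
  then show ?thesis by (simp add: power2_eq_iff_nonneg)
qed

lemma norm_normalize: "(x::complex^'n) \<noteq> 0 \<Longrightarrow> norm (complex_of_real (1 / norm x) *s x) = 1"
  by (simp only: norm_smult norm_of_real) simp

lemma cadj_cadj[simp]: "cadj (cadj A) = A"
  by (simp add: cadj_def vec_eq_iff)

lemma cadj_mult: "cadj (A ** B) = cadj B ** cadj A"
  by (simp add: cadj_def vec_eq_iff matrix_matrix_mult_def mult.commute)

lemma cadj_add: "cadj (A + B) = cadj A + cadj B"
  by (simp add: cadj_def vec_eq_iff)

lemma cadj_diag_real: "cadj (diagm (\<lambda>i. complex_of_real (d i))) = diagm (\<lambda>i. complex_of_real (d i))"
  by (simp add: cadj_def diagm_def vec_eq_iff)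

lemma hip_adj: "hip x (A *v y) = hip (cadj A *v x) y"
proof -
  have "hip x (A *v y) = (\<Sum>k\<in>UNIV. \<Sum>l\<in>UNIV. cnj (x$k) * (A$k$l * y$l))"
    by (simp add: hip_def matrix_vector_mult_def sum_distrib_left)
  also have "\<dots> = (\<Sum>l\<in>UNIV. \<Sum>k\<in>UNIV. cnj (x$k) * (A$k$l * y$l))" by (rule sum.swap)
  also have "\<dots> = hip (cadj A *v x) y"
    by (simp add: hip_def matrix_vector_mult_def cadj_def sum_distrib_left sum_distrib_right mult_ac)
  finally show ?thesis .
qed

lemma hip_herm: "herm A \<Longrightarrow> hip x (A *v y) = hip (A *v x) y"
  by (metis hip_adj herm_def)

lemma herm_Re: "herm A \<Longrightarrow> Re (hip x (A *v y)) = Re (hip y (A *v x))"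
  by (metis hip_herm hip_cnj cnj.sel(1))

lemma herm_Im: "herm A \<Longrightarrow> Im (hip x (A *v x)) = 0"
  by (metis hip_herm hip_cnj cnj.sel(2) neg_equal_zero)

lemma herm_hip_real: "herm A \<Longrightarrow> hip x (A *v x) = complex_of_real (Re (hip x (A *v x)))"
  using herm_Im complex_eq_iff by auto

lemma mv_add: "A *v (x + y) = A *v x + A *v y"
  by (simp add: matrix_vector_right_distrib)
lemma mv_diff: "(A::complex^'n^'m) *v (x - y) = A *v x - A *v y"
proof -
  have "A *v x = A *v (x - y) + A *v y" using mv_add[of A "x - y" y] by simp
  then show ?thesis by (simp add: eq_diff_eq)
qed

lemma diagm_mv: "diagm d *v x = (\<chi> i. d i * x$i)"
  by (simp add: diagm_def matrix_vector_mult_def vec_eq_iff if_distrib if_distribR cong: if_cong)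

lemma hip_axis: "hip (axis k 1) (A *v axis k 1) = A$k$k"
  by (simp add: hip_def matrix_vector_mult_def axis_def if_distrib if_distribR cong: if_cong)

lemma norm_axis1: "norm (axis k (1::complex)) = 1"
proof -
  have "hip (axis k 1) (axis k (1::complex)) = 1"
    by (simp add: hip_def axis_def if_distrib if_distribR cong: if_cong)
  then have "(norm (axis k (1::complex)))^2 = 1" using hip_self
    by (metis of_real_eq_1_iff)
  then show ?thesis by (simp add: power2_eq_1_iff)
qed



lemma exists_orth:
  fixes u :: "'n::finite \<Rightarrow> complex^'n"
  assumes "a \<notin> S"
  shows "\<exists>v. v \<noteq> 0 \<and> (\<forall>i\<in>S. hip (u i) v = 0)"
proof -
  define B :: "complex^'n^'n" where "B = (\<chi> k. if k \<in> S then (\<chi> l. cnj (u k $ l)) else 0)"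
  have "row a B = 0" using assms by (simp add: B_def row_def vec_eq_iff)
  then have "det B = 0" by (rule det_zero_row(2))
  then have "\<not> inj ((*v) B)"
    using det_nz_iff_inj_gen[OF matrix_vector_mul_linear_gen[of B]]
    by (simp only: matrix_of_matrix_vector_mul) simp
  then obtain x y where xy: "x \<noteq> y" "B *v x = B *v y" unfolding inj_def by blast
  define v where "v = x - y"
  have v0: "v \<noteq> 0" using xy by (simp add: v_def)
  have Bv: "B *v v = 0" using xy by (simp add: v_def mv_diff)
  have "hip (u i) v = 0" if "i \<in> S" for i
  proof -
    have "(B *v v) $ i = hip (u i) v"
      using that by (simp add: B_def matrix_vector_mult_def hip_def)
    then show ?thesis using Bv by simp
  qed
  then show ?thesis using v0 by blast
qed

lemma quad_zero:
  fixes a b :: real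
  assumes le: "\<And>t. b * t + a * t^2 \<le> 0" and b: "b \<ge> 0"
  shows "b = 0"
proof (rule ccontr)
  assume "b \<noteq> 0"
  then have bp: "b > 0" using b by simp
  define c where "c = \<bar>a\<bar> + 1"
  have cp: "c > 0" by (simp add: c_def add_nonneg_pos)
  define t where "t = b / (2 * c)"
  have tp: "t > 0" using bp cp by (simp add: t_def)
  have "t * (b + a * t) \<le> 0" using le[of t] by (simp add: power2_eq_square algebra_simps)
  then have h1: "b + a * t \<le> 0" using tp by (simp add: mult_le_0_iff)
  have "- c \<le> a" by (simp add: c_def)
  then have h2: "- c * t \<le> a * t" using tp by (intro mult_right_mono) auto
  have h3: "c * t = b / 2" using cp by (simp add: t_def)
  show False using h1 h2 h3 bp by linarith
qed

lemma variational:
  fixes A :: "complex^'n^'n" and W :: "(complex^'n) set"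
  assumes hA: "herm A" and vW: "v \<in> W" and nv: "norm v = 1"
    and addW: "\<And>x y c. x \<in> W \<Longrightarrow> y \<in> W \<Longrightarrow> x + c *s y \<in> W"
    and scW: "\<And>x c. x \<in> W \<Longrightarrow> c *s x \<in> W"
    and AW: "\<And>x. x \<in> W \<Longrightarrow> A *v x \<in> W"
    and mx: "\<And>x. x \<in> W \<Longrightarrow> norm x = 1 \<Longrightarrow> Re (hip x (A *v x)) \<le> Re (hip v (A *v v))"
  shows "A *v v = complex_of_real (Re (hip v (A *v v))) *s v"
proof -
  define q where "q x = Re (hip x (A *v x))" for x
  define m where "m = q v"
  have qsc: "q (c *s x) = (cmod c)^2 * q x" for c x
  proof -
    have "hip (c *s x) (A *v (c *s x)) = (cnj c * c) * hip x (A *v x)"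
      by (simp add: hip_scale_left hip_scale_right vector_scalar_commute)
    also have "cnj c * c = complex_of_real ((cmod c)^2)"
      by (rule cnj_mult_self)
    finally show ?thesis unfolding q_def by simp
  qed
  have qle: "q x \<le> m * (norm x)^2" if "x \<in> W" for x
  proof (cases "x = 0")
    case True then show ?thesis by (simp add: q_def)
  next
    case False
    then have nx: "norm x > 0" by simp
    define y where "y = complex_of_real (1 / norm x) *s x"
    have yW: "y \<in> W" using scW that by (simp add: y_def)
    have cy: "cmod (complex_of_real (1 / norm x)) = 1 / norm x" using nx by (simp only: norm_of_real) simp
    have ny: "norm y = 1" using nx
      by (simp only: y_def norm_smult cy) simp
    have "q y = (1 / norm x)^2 * q x"
      by (simp only: y_def qsc cy)
    moreover have "q y \<le> m" using mx[OF yW ny] by (simp add: q_def m_def)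
    ultimately have "(1 / norm x)^2 * q x \<le> m" by simp
    then have "q x \<le> m * (norm x)^2" using nx
      by (simp add: field_simps)
    then show ?thesis .
  qed
  define w where "w = A *v v + complex_of_real (- m) *s v"
  have wW: "w \<in> W" unfolding w_def by (intro addW AW vW)
  have key: "2 * (norm w)^2 * t + (q w - m * (norm w)^2) * t^2 \<le> 0" for t :: real
  proof -
    define x where "x = v + complex_of_real t *s w"
    have xW: "x \<in> W" unfolding x_def by (intro addW vW wW)
    have e1: "hip x (A *v x) = hip v (A *v v) + complex_of_real t * (hip v (A *v w) + hip w (A *v v))
       + complex_of_real (t^2) * hip w (A *v w)"
      by (simp add: x_def mv_add vector_scalar_commute hip_add_left hip_add_right hip_scale_left
          hip_scale_right algebra_simps power2_eq_square)
    have e2: "hip x x = hip v v + complex_of_real t * (hip v w + hip w v)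
       + complex_of_real (t^2) * hip w w"
      by (simp add: x_def hip_add_left hip_add_right hip_scale_left
          hip_scale_right algebra_simps power2_eq_square)
    have r1: "Re (hip v (A *v w)) = Re (hip w (A *v v))" using herm_Re[OF hA] .
    have r2: "Re (hip v w) = Re (hip w v)" by (metis hip_cnj cnj.sel(1))
    have qx: "q x = m + 2 * t * Re (hip w (A *v v)) + t^2 * q w"
      unfolding q_def m_def e1 using r1 by (simp del: of_real_power)
    have "(norm x)^2 = Re (hip x x)" by (simp add: hip_self_Re)
    also have "\<dots> = Re (hip v v) + t * (Re (hip v w) + Re (hip w v)) + t^2 * Re (hip w w)"
      unfolding e2 by (simp del: of_real_power)
    also have "\<dots> = 1 + 2 * t * Re (hip w v) + t^2 * (norm w)^2"
      using r2 nv by (simp add: hip_self_Re)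
    finally have nx2: "(norm x)^2 = 1 + 2 * t * Re (hip w v) + t^2 * (norm w)^2" .
    have hR: "Re (hip w (A *v v)) = (norm w)^2 + m * Re (hip w v)"
    proof -
      have "hip w (A *v v + complex_of_real (- m) *s v) = hip w (A *v v) + complex_of_real (- m) * hip w v"
        by (simp only: hip_add_right hip_scale_right)
      then have "hip w w = hip w (A *v v) + complex_of_real (- m) * hip w v"
        by (simp only: w_def[symmetric])
      then show ?thesis by (simp add: hip_self_Re[symmetric])
    qed
    have "q x - m * (norm x)^2 = 2 * (norm w)^2 * t + (q w - m * (norm w)^2) * t^2"
      by (simp only: qx nx2 hR) algebra
    then show ?thesis using qle[OF xW] by linarith
  qed
  have "2 * (norm w)^2 = 0"
    by (rule quad_zero[of "2 * (norm w)^2" "q w - m * (norm w)^2"]) (use key in auto)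
  then have "w = 0" by simp
  then have "\<forall>i. (A *v v)$i + complex_of_real (- m) * v$i = 0"
    unfolding w_def by (simp only: vec_eq_iff vector_add_component vector_smult_component zero_index) simp
  then show ?thesis unfolding m_def[symmetric] q_def[symmetric]
    by (simp add: vec_eq_iff add_eq_0_iff)
qed



lemma mv_component: "(A *v x) $ k = (\<Sum>j\<in>UNIV. A$k$j * x$j)"
  by (simp add: matrix_vector_mult_def)

lemma continuous_hip_right: "continuous_on X (\<lambda>x. hip (u::complex^'n) x)"
  unfolding hip_def by (intro continuous_intros)

lemma continuous_quad: "continuous_on X (\<lambda>x. Re (hip x ((A::complex^'n^'n) *v x)))"
  unfolding hip_def mv_component by (intro continuous_intros)

lemma ortho_eig:
  fixes A :: "complex^'n^'n" and S :: "'n set"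
  assumes hA: "herm A" and fin: "finite S"
  shows "\<exists>u \<mu>. (\<forall>i\<in>S. \<forall>j\<in>S. hip (u i) (u j) = (if i = j then 1 else 0)) \<and>
               (\<forall>i\<in>S. A *v u i = complex_of_real (\<mu> i) *s u i)"
  using fin
proof (induction S rule: finite_induct)
  case empty
  show ?case by simp
next
  case (insert a S)
  obtain u \<mu> where on: "\<forall>i\<in>S. \<forall>j\<in>S. hip (u i) (u j) = (if i = j then 1 else 0)"
    and ev: "\<forall>i\<in>S. A *v u i = complex_of_real (\<mu> i) *s u i"
    using insert.IH by blast
  define W where "W = {x. \<forall>i\<in>S. hip (u i) x = 0}"
  obtain v0 where v0: "v0 \<noteq> 0" "\<forall>i\<in>S. hip (u i) v0 = 0"
    using exists_orth[OF insert.hyps(2)] by blast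
  have addW: "x + c *s y \<in> W" if "x \<in> W" "y \<in> W" for x y c
    using that by (simp add: W_def hip_add_right hip_scale_right)
  have scW: "c *s x \<in> W" if "x \<in> W" for x c
    using that by (simp add: W_def hip_scale_right)
  have AW: "A *v x \<in> W" if "x \<in> W" for x
  proof -
    have "hip (u i) (A *v x) = 0" if "i \<in> S" for i
    proof -
      have "hip (u i) (A *v x) = hip (A *v u i) x" by (rule hip_herm[OF hA])
      also have "\<dots> = cnj (complex_of_real (\<mu> i)) * hip (u i) x"
        using ev that by (simp add: hip_scale_left)
      also have "\<dots> = 0" using \<open>x \<in> W\<close> that by (simp add: W_def)
      finally show ?thesis .
    qed
    then show ?thesis by (simp add: W_def)
  qed
  have Weq: "W = (\<Inter>i\<in>S. {x. hip (u i) x = 0})" by (auto simp: W_def)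
  have clW: "closed W" unfolding Weq
    by (intro closed_INT ballI closed_Collect_eq continuous_hip_right continuous_on_const)
  define T where "T = sphere 0 1 \<inter> W"
  have cT: "compact T" unfolding T_def by (intro compact_Int_closed compact_sphere clW)
  define y0 where "y0 = complex_of_real (1 / norm v0) *s v0"
  have "y0 \<in> T"
  proof -
    have "norm y0 = 1" using v0(1) unfolding y0_def by (rule norm_normalize)
    moreover have "y0 \<in> W" unfolding y0_def by (intro scW) (use v0 in \<open>simp add: W_def\<close>)
    ultimately show ?thesis by (simp add: T_def)
  qed
  then have "T \<noteq> {}" by blast
  from continuous_attains_sup[OF cT this continuous_quad]
  obtain v where vT: "v \<in> T" and vmax: "\<forall>y\<in>T. Re (hip y (A *v y)) \<le> Re (hip v (A *v v))"
    by blast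
  have vW: "v \<in> W" and nv: "norm v = 1" using vT by (auto simp: T_def)
  have eigv: "A *v v = complex_of_real (Re (hip v (A *v v))) *s v"
    by (rule variational[OF hA vW nv addW scW AW]) (use vmax in \<open>auto simp: T_def\<close>)
  define u' where "u' = u(a := v)"
  define \<mu>' where "\<mu>' = \<mu>(a := Re (hip v (A *v v)))"
  have hvv: "hip v v = 1" using nv by (simp add: hip_self)
  have hiv: "hip (u i) v = 0" if "i \<in> S" for i using vW that by (simp add: W_def)
  have hvi: "hip v (u i) = 0" if "i \<in> S" for i using hiv[OF that] hip_cnj[of "u i" v] by simp
  have "\<forall>i\<in>insert a S. \<forall>j\<in>insert a S. hip (u' i) (u' j) = (if i = j then 1 else 0)"
    using on hvv hiv hvi insert.hyps(2) by (auto simp: u'_def)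
  moreover have "\<forall>i\<in>insert a S. A *v u' i = complex_of_real (\<mu>' i) *s u' i"
    using ev eigv insert.hyps(2) by (auto simp: u'_def \<mu>'_def)
  ultimately show ?case by blast
qed

lemma spectral:
  fixes A :: "complex^'n^'n"
  assumes hA: "herm A"
  shows "\<exists>(U::complex^'n^'n) \<mu>. cadj U ** U = mat 1 \<and> U ** cadj U = mat 1 \<and>
               A ** U = U ** diagm (\<lambda>i. complex_of_real (\<mu> i))"
proof -
  have "\<exists>(u::'n \<Rightarrow> complex^'n) \<mu>. (\<forall>i j. hip (u i) (u j) = (if i = j then 1 else 0)) \<and>
               (\<forall>i. A *v u i = complex_of_real (\<mu> i) *s u i)"
    using ortho_eig[OF hA finite[of UNIV]] by (simp only: ball_UNIV)
  then obtain u :: "'n \<Rightarrow> complex^'n" and \<mu> where on: "\<forall>i j. hip (u i) (u j) = (if i = j then 1 else 0)"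
    and ev: "\<forall>i. A *v u i = complex_of_real (\<mu> i) *s u i"
    by blast
  define U :: "complex^'n^'n" where "U = (\<chi> k i. u i $ k)"
  have 1: "cadj U ** U = mat 1"
  proof -
    have "(cadj U ** U) $ i $ j = (mat 1 :: complex^'n^'n) $ i $ j" for i j
      using on by (simp add: U_def cadj_def matrix_matrix_mult_def hip_def mat_def)
    then show ?thesis by (simp add: vec_eq_iff)
  qed
  then have 2: "U ** cadj U = mat 1" by (simp add: matrix_left_right_inverse)
  have 3: "A ** U = U ** diagm (\<lambda>i. complex_of_real (\<mu> i))"
  proof -
    have "(A ** U) $ k $ i = (U ** diagm (\<lambda>i. complex_of_real (\<mu> i))) $ k $ i" for k i
    proof -
      have "(A ** U) $ k $ i = (A *v u i) $ k"
        by (simp add: U_def matrix_matrix_mult_def matrix_vector_mult_def)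
      also have "\<dots> = complex_of_real (\<mu> i) * u i $ k" using ev by simp
      also have "\<dots> = (U ** diagm (\<lambda>i. complex_of_real (\<mu> i))) $ k $ i"
        by (simp add: U_def matrix_matrix_mult_def diagm_def if_distrib if_distribR mult.commute cong: if_cong)
      finally show ?thesis .
    qed
    then show ?thesis by (simp add: vec_eq_iff)
  qed
  show ?thesis using 1 2 3 by blast
qed



lemma spectral_facts:
  fixes A :: "complex^'n^'n"
  assumes hA: "herm A"
  obtains U :: "complex^'n^'n" and \<mu> where "cadj U ** U = mat 1" "U ** cadj U = mat 1"
    "A = U ** diagm (\<lambda>i. complex_of_real (\<mu> i)) ** cadj U"
    "cadj U ** A = diagm (\<lambda>i. complex_of_real (\<mu> i)) ** cadj U"
    "\<And>i. A *v (\<chi> k. U$k$i) = complex_of_real (\<mu> i) *s (\<chi> k. U$k$i)"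
    "\<And>i. hip (\<chi> k. U$k$i) (\<chi> k. U$k$i) = 1"
proof -
  obtain U :: "complex^'n^'n" and \<mu> where 1: "cadj U ** U = mat 1" and 2: "U ** cadj U = mat 1"
    and 3: "A ** U = U ** diagm (\<lambda>i. complex_of_real (\<mu> i))"
    using spectral[OF hA] by blast
  define D where "D = diagm (\<lambda>i. complex_of_real (\<mu> i))"
  have A: "A = U ** D ** cadj U"
  proof -
    have "A = A ** (U ** cadj U)" using 2 by simp
    also have "\<dots> = U ** D ** cadj U" using 3 by (simp add: matrix_mul_assoc D_def)
    finally show ?thesis .
  qed
  have B: "cadj U ** A = D ** cadj U"
  proof -
    have "cadj U ** A = (cadj U ** U) ** D ** cadj U" by (simp add: A matrix_mul_assoc)
    then show ?thesis using 1 by simp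
  qed
  have C: "A *v (\<chi> k. U$k$i) = complex_of_real (\<mu> i) *s (\<chi> k. U$k$i)" for i
  proof -
    have "(A *v (\<chi> k. U$k$i)) $ k = (A ** U) $ k $ i" for k
      by (simp add: matrix_matrix_mult_def matrix_vector_mult_def)
    moreover have "(U ** D) $ k $ i = complex_of_real (\<mu> i) * U $ k $ i" for k
      by (simp add: D_def matrix_matrix_mult_def diagm_def if_distrib if_distribR mult.commute cong: if_cong)
    ultimately show ?thesis using 3 by (simp add: vec_eq_iff D_def)
  qed
  have E: "hip (\<chi> k. U$k$i) (\<chi> k. U$k$i) = 1" for i
  proof -
    have "hip (\<chi> k. U$k$i) (\<chi> k. U$k$i) = (cadj U ** U) $ i $ i"
      by (simp add: hip_def cadj_def matrix_matrix_mult_def)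
    then show ?thesis using 1 by (simp add: mat_def)
  qed
  show ?thesis using that[OF 1 2 A[unfolded D_def] B[unfolded D_def] C E] .
qed

lemma lambda_max_bound:
  fixes A :: "complex^'n^'n"
  assumes hA: "herm A"
  shows "Re (hip x (A *v x)) \<le> lambda_max A * (norm x)^2"
proof -
  obtain U :: "complex^'n^'n" and \<mu> where 1: "cadj U ** U = mat 1" and 2: "U ** cadj U = mat 1"
    and A: "A = U ** diagm (\<lambda>i. complex_of_real (\<mu> i)) ** cadj U"
    and B: "cadj U ** A = diagm (\<lambda>i. complex_of_real (\<mu> i)) ** cadj U"
    and C: "\<And>i. A *v (\<chi> k. U$k$i) = complex_of_real (\<mu> i) *s (\<chi> k. U$k$i)"
    and E: "\<And>i. hip (\<chi> k. U$k$i) (\<chi> k. U$k$i) = 1"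
    using spectral_facts[OF hA] by metis
  define D where "D = diagm (\<lambda>i. complex_of_real (\<mu> i))"
  define Ev where "Ev = {r::real. \<exists>v. v \<noteq> 0 \<and> A *v v = complex_of_real r *s v}"
  have sub: "Ev \<subseteq> range \<mu>"
  proof
    fix r assume "r \<in> Ev"
    then obtain v where v0: "v \<noteq> 0" and ev: "A *v v = complex_of_real r *s v"
      by (auto simp: Ev_def)
    define y where "y = cadj U *v v"
    have Dy: "D *v y = complex_of_real r *s y"
    proof -
      have "D *v y = (cadj U ** A) *v v" by (simp add: y_def B D_def matrix_vector_mul_assoc)
      also have "\<dots> = cadj U *v (A *v v)" by (simp add: matrix_vector_mul_assoc)
      also have "\<dots> = complex_of_real r *s y" by (simp add: ev y_def vector_scalar_commute)
      finally show ?thesis .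
    qed
    have "U *v y = v" using 2 by (simp add: y_def matrix_vector_mul_assoc)
    then have "y \<noteq> 0" using v0 by auto
    then obtain i where yi: "y $ i \<noteq> 0" by (auto simp: vec_eq_iff)
    have "(D *v y) $ i = complex_of_real (\<mu> i) * y $ i" by (simp add: D_def diagm_mv)
    then have "complex_of_real (\<mu> i) * y $ i = complex_of_real r * y $ i" using Dy by auto
    then have "\<mu> i = r" using yi by simp
    then show "r \<in> range \<mu>" by blast
  qed
  have fin: "finite Ev" by (rule finite_subset[OF sub]) simp
  have muE: "\<mu> i \<in> Ev" for i
  proof -
    have "(\<chi> k. U$k$i) \<noteq> 0" using E[of i] by auto
    then show ?thesis using C[of i] by (auto simp: Ev_def)
  qed
  have mule: "\<mu> i \<le> lambda_max A" for i
    unfolding lambda_max_def Ev_def[symmetric] using fin muE by simp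
  define y where "y = cadj U *v x"
  have "hip x (A *v x) = hip x (U *v (D *v y))"
    by (simp add: A D_def y_def matrix_vector_mul_assoc matrix_mul_assoc)
  also have "\<dots> = hip y (D *v y)" by (simp add: hip_adj y_def)
  also have "\<dots> = complex_of_real (\<Sum>i\<in>UNIV. \<mu> i * (cmod (y$i))^2)"
    by (simp add: hip_def D_def diagm_mv mult.left_commute cnj_mult_self)
  finally have eq1: "Re (hip x (A *v x)) = (\<Sum>i\<in>UNIV. \<mu> i * (cmod (y$i))^2)" by simp
  have ny: "(norm y)^2 = (norm x)^2"
  proof -
    have "hip y y = hip x (U *v y)" by (simp add: hip_adj y_def)
    also have "U *v y = x" using 2 by (simp add: y_def matrix_vector_mul_assoc)
    finally have "hip y y = hip x x" .
    then have "complex_of_real ((norm y)^2) = complex_of_real ((norm x)^2)" by (simp only: hip_self)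
    then show ?thesis by (simp only: of_real_eq_iff)
  qed
  have "(\<Sum>i\<in>UNIV. \<mu> i * (cmod (y$i))^2) \<le> (\<Sum>i\<in>UNIV. lambda_max A * (cmod (y$i))^2)"
    by (intro sum_mono mult_right_mono mule) simp
  also have "\<dots> = lambda_max A * (norm y)^2"
    by (simp add: sum_distrib_left norm_vec_def L2_set_def sum_nonneg)
  finally show ?thesis using eq1 ny by simp
qed



lemma det_diagm: "det (diagm (f::'n::finite \<Rightarrow> 'a::comm_ring_1)) = (\<Prod>k\<in>UNIV. f k)"
  by (subst det_diagonal) (auto simp: diagm_def)

lemma diag_sandwich: "(diagm f ** M ** diagm g) $ a $ b = f a * M$a$b * (g b :: 'a::comm_ring_1)"
  by (simp add: diagm_def matrix_matrix_mult_def if_distrib if_distribR cong: if_cong)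

lemma trace_diagm: "trace (diagm f) = (\<Sum>k\<in>UNIV. f k)"
  by (simp add: trace_def diagm_def)

lemma ln_strict: fixes x :: real assumes "x > 0" "x \<noteq> 1" shows "ln x < x - 1"
proof -
  have sp: "sqrt x > 0" using assms by simp
  have s1: "sqrt x \<noteq> 1" using assms by simp
  have "ln x = 2 * ln (sqrt x)" using assms by (simp add: ln_sqrt)
  also have "\<dots> \<le> 2 * (sqrt x - 1)" using ln_le_minus_one[OF sp] by simp
  also have "\<dots> < x - 1"
  proof -
    have "(sqrt x - 1)^2 > 0" using s1 by simp
    then have "(sqrt x)^2 - 2 * sqrt x + 1 > 0" by (simp add: power2_eq_square algebra_simps)
    then show ?thesis using assms by simp
  qed
  finally show ?thesis .
qed

lemma herm_diag_real: "herm P \<Longrightarrow> P$k$k = complex_of_real (Re (P$k$k))"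
proof -
  assume "herm P"
  then have "cadj P $ k $ k = P $ k $ k" by (simp add: herm_def)
  then have "cnj (P$k$k) = P$k$k" by (simp add: cadj_def)
  then have "Im (P$k$k) = 0" by (metis cnj.sel(2) neg_equal_zero)
  then show ?thesis by (simp add: complex_eq_iff)
qed

lemma hadamard_strict:
  fixes P :: "complex^'n^'n"
  assumes hP: "herm P" and pd: "\<And>x. x \<noteq> 0 \<Longrightarrow> Re (hip x (P *v x)) > 0"
    and ij: "i \<noteq> j" "P$i$j \<noteq> 0"
  shows "det P = complex_of_real (Re (det P)) \<and> 0 < Re (det P) \<and> Re (det P) < (\<Prod>k\<in>UNIV. Re (P$k$k))"
proof -
  define d where "d k = Re (P$k$k)" for k
  have dpos: "d k > 0" for k
  proof -
    have "axis k (1::complex) \<noteq> 0" by (simp add: axis_def vec_eq_iff)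
    from pd[OF this] show ?thesis by (simp add: hip_axis d_def)
  qed
  have Pkk: "P$k$k = complex_of_real (d k)" for k using herm_diag_real[OF hP] by (simp add: d_def)
  define s where "s k = 1 / sqrt (d k)" for k
  have spos: "s k > 0" for k using dpos[of k] by (simp add: s_def)
  have s2d: "(s k)^2 * d k = 1" for k using dpos[of k] by (simp add: s_def power_divide)
  define S where "S = diagm (\<lambda>k. complex_of_real (s k))"
  define Q where "Q = S ** P ** S"
  have cS: "cadj S = S" by (simp add: S_def cadj_diag_real)
  have hQ: "herm Q" using hP unfolding herm_def Q_def
    by (simp add: cadj_mult cS matrix_mul_assoc)
  have Qe: "Q $ a $ b = complex_of_real (s a) * P$a$b * complex_of_real (s b)" for a b
    unfolding Q_def S_def by (rule diag_sandwich)
  obtain U :: "complex^'n^'n" and \<mu> where 1: "cadj U ** U = mat 1" and 2: "U ** cadj U = mat 1"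
    and A: "Q = U ** diagm (\<lambda>i. complex_of_real (\<mu> i)) ** cadj U"
    and C: "\<And>i. Q *v (\<chi> k. U$k$i) = complex_of_real (\<mu> i) *s (\<chi> k. U$k$i)"
    and E: "\<And>i. hip (\<chi> k. U$k$i) (\<chi> k. U$k$i) = 1"
    using spectral_facts[OF hQ] by metis
  define D where "D = diagm (\<lambda>i. complex_of_real (\<mu> i))"
  have mupos: "\<mu> i > 0" for i
  proof -
    define c where "c = (\<chi> k. U$k$i)"
    have "hip c (Q *v c) = complex_of_real (\<mu> i)"
      using C[of i] E[of i] by (simp add: c_def hip_scale_right)
    moreover have "hip c (Q *v c) = hip (S *v c) (P *v (S *v c))"
      by (simp add: Q_def matrix_vector_mul_assoc[symmetric] hip_adj cS)
    moreover have "S *v c \<noteq> 0"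
    proof
      assume "S *v c = 0"
      then have "complex_of_real (s k) * c $ k = 0" for k
        by (metis (no_types, lifting) S_def diagm_mv vec_lambda_beta zero_index)
      then have "c = 0" using spos by (metis vec_eq_iff zero_index less_irrefl mult_eq_0_iff of_real_eq_0_iff)
      then show False using E[of i] by (simp add: c_def[symmetric])
    qed
    ultimately show ?thesis using pd by fastforce
  qed
  have detQ: "det Q = (\<Prod>k\<in>UNIV. complex_of_real (\<mu> k))"
  proof -
    have "det Q = det U * det D * det (cadj U)" by (simp add: A D_def det_mul)
    also have "\<dots> = det D * det (U ** cadj U)" by (simp add: det_mul)
    also have "\<dots> = det D" using 2 by simp
    finally show ?thesis by (simp add: D_def det_diagm)
  qed
  have detQ2: "det Q = (\<Prod>k\<in>UNIV. complex_of_real (s k))^2 * det P"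
    by (simp add: Q_def S_def det_mul det_diagm power2_eq_square)
  define pm where "pm = (\<Prod>k\<in>UNIV. \<mu> k)"
  define pd' where "pd' = (\<Prod>k\<in>UNIV. d k)"
  define ps where "ps = (\<Prod>k\<in>UNIV. s k)"
  have pmpos: "pm > 0" unfolding pm_def using mupos by (simp add: prod_pos)
  have pdpos: "pd' > 0" unfolding pd'_def using dpos by (simp add: prod_pos)
  have psd: "ps^2 * pd' = 1"
  proof -
    have "ps^2 = (\<Prod>k\<in>UNIV. (s k)^2)" unfolding ps_def by (metis prod_power_distrib)
    then have "ps^2 * pd' = (\<Prod>k\<in>UNIV. (s k)^2 * d k)" by (simp add: pd'_def prod.distrib)
    then show ?thesis by (simp add: s2d)
  qed
  have "complex_of_real pm = complex_of_real (ps^2) * det P"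
    using detQ detQ2 by (simp add: pm_def ps_def)
  then have "complex_of_real (pm * pd') = det P"
    using psd by (metis (no_types, lifting) mult.assoc mult.commute mult_1 of_real_1 of_real_mult)
  then have detP: "det P = complex_of_real (pm * pd')" by simp
  have tr: "(\<Sum>k\<in>UNIV. \<mu> k) = real CARD('n)"
  proof -
    have "trace Q = trace (U ** (D ** cadj U))" by (simp add: A D_def matrix_mul_assoc)
    also have "\<dots> = trace ((D ** cadj U) ** U)" by (rule trace_mul_sym)
    also have "\<dots> = trace D" using 1 by (simp add: matrix_mul_assoc[symmetric])
    finally have t1: "trace Q = (\<Sum>k\<in>UNIV. complex_of_real (\<mu> k))" by (simp add: D_def trace_diagm)
    have "trace Q = (\<Sum>k\<in>UNIV. complex_of_real ((s k)^2 * d k))"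
      unfolding trace_def Qe Pkk by (simp add: power2_eq_square mult_ac)
    also have "\<dots> = of_nat CARD('n)" by (simp add: s2d)
    finally have "complex_of_real (\<Sum>k\<in>UNIV. \<mu> k) = complex_of_real (real CARD('n))"
      using t1 by simp
    then show ?thesis by (simp only: of_real_eq_iff)
  qed
  have ex: "\<exists>k. \<mu> k \<noteq> 1"
  proof (rule ccontr)
    assume "\<not> (\<exists>k. \<mu> k \<noteq> 1)"
    then have "D = mat 1" by (simp add: D_def diagm_def mat_def)
    then have "Q = mat 1" using A 2 by (simp add: D_def)
    then have "Q $ i $ j = 0" using ij by (simp add: mat_def)
    then have "s i = 0 \<or> s j = 0" using ij by (simp add: Qe)
    then show False using spos by (metis less_irrefl)
  qed
  have "(\<Sum>k\<in>UNIV. ln (\<mu> k)) < (\<Sum>k\<in>UNIV. \<mu> k - 1)"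
  proof (rule sum_strict_mono_ex1)
    show "\<forall>k\<in>UNIV. ln (\<mu> k) \<le> \<mu> k - 1" using mupos ln_le_minus_one by blast
    show "\<exists>k\<in>UNIV. ln (\<mu> k) < \<mu> k - 1" using ex mupos ln_strict by blast
  qed simp
  also have "\<dots> = 0" using tr by (simp add: sum_subtractf)
  finally have lsum: "(\<Sum>k\<in>UNIV. ln (\<mu> k)) < 0" .
  have mu0: "\<mu> k \<noteq> 0" for k using mupos[of k] by linarith
  have "ln pm = (\<Sum>k\<in>UNIV. ln (\<mu> k))" unfolding pm_def
    by (rule ln_prod) (simp_all add: mu0)
  then have "ln pm < 0" using lsum by simp
  then have "pm < 1" using pmpos by simp
  then have "pm * pd' < pd'" using pdpos by simp
  moreover have "Re (det P) = pm * pd'" using detP by (simp only: Re_complex_of_real)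
  moreover have "pd' = (\<Prod>k\<in>UNIV. Re (P$k$k))" by (simp add: pd'_def d_def)
  moreover have "0 < pm * pd'" using pmpos pdpos by simp
  ultimately show ?thesis using detP by (simp only:)
qed



lemma hip_diag: "hip y (diagm (\<lambda>i. complex_of_real (a i)) *v y) = complex_of_real (\<Sum>i\<in>UNIV. a i * (cmod (y$i))^2)"
  by (simp add: hip_def diagm_mv mult.left_commute cnj_mult_self)

lemma psd_MDM:
  fixes M :: "complex^'n^'k"
  assumes "\<And>i. a i \<ge> 0"
  shows "Re (hip x ((M ** diagm (\<lambda>i. complex_of_real (a i)) ** cadj M) *v x)) \<ge> 0"
proof -
  have "hip x ((M ** diagm (\<lambda>i. complex_of_real (a i)) ** cadj M) *v x)
      = hip (cadj M *v x) (diagm (\<lambda>i. complex_of_real (a i)) *v (cadj M *v x))"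
    by (simp add: matrix_vector_mul_assoc[symmetric] hip_adj)
  then show ?thesis using assms by (simp add: hip_diag sum_nonneg)
qed

lemma herm_MDM:
  fixes M :: "complex^'n^'k"
  shows "herm (M ** diagm (\<lambda>i. complex_of_real (a i)) ** cadj M)"
  unfolding herm_def by (simp add: cadj_mult cadj_diag_real matrix_mul_assoc)

lemma herm_add: "herm A \<Longrightarrow> herm B \<Longrightarrow> herm (A + B)"
  by (simp add: herm_def cadj_add)

lemma diag_le_lambda: "herm A \<Longrightarrow> Re (A$k$k) \<le> lambda_max A"
  using lambda_max_bound[of A "axis k 1"] by (simp add: hip_axis norm_axis1)

lemma sum_pair_snd:
  "(\<Sum>p\<in>(UNIV::('a::finite \<times> 'b::finite) set). (if snd p = k then f p else 0)) = (\<Sum>j\<in>UNIV. f (j,k))"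
proof -
  define g where "g p = (if snd p = k then f p else 0)" for p :: "'a \<times> 'b"
  have "(\<Sum>p\<in>(UNIV::('a \<times> 'b) set). g p) = (\<Sum>p\<in>(UNIV \<times> UNIV). g p)"
    by (simp only: UNIV_Times_UNIV)
  also have "\<dots> = (\<Sum>x\<in>UNIV. \<Sum>y\<in>UNIV. g (x,y))"
    unfolding sum.cartesian_product by simp
  finally have "(\<Sum>p\<in>(UNIV::('a \<times> 'b) set). (if snd p = k then f p else 0))
      = (\<Sum>x\<in>UNIV. \<Sum>y\<in>UNIV. (if y = k then f (x,y) else 0))"
    by (simp add: g_def)
  also have "\<dots> = (\<Sum>j\<in>UNIV. f (j,k))" by simp
  finally show ?thesis .
qed

lemma G_entry:
  fixes hcb :: "'j::finite \<Rightarrow> 'k::finite \<Rightarrow> complex" and K :: "'j \<Rightarrow> complex^'k^'k"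
  defines "H \<equiv> (\<chi> k p. if k = snd p then hcb (fst p) k else 0) :: complex^('j \<times> 'k)^'k"
  defines "Kx \<equiv> (\<chi> p q. if fst p = fst q then K (fst p) $ snd p $ snd q else 0) :: complex^('j \<times> 'k)^('j \<times> 'k)"
  shows "(H ** Kx ** cadj H) $ k $ l = (\<Sum>j\<in>UNIV. hcb j k * K j $ k $ l * cnj (hcb j l))"
proof -
  have HK: "(H ** Kx) $ k $ q = (\<Sum>j\<in>UNIV. hcb j k * Kx $ (j,k) $ q)" for q
  proof -
    have "(H ** Kx) $ k $ q = (\<Sum>p\<in>UNIV. (if snd p = k then hcb (fst p) k * Kx $ p $ q else 0))"
      unfolding matrix_matrix_mult_def H_def vec_lambda_beta by (intro sum.cong refl) (auto)
    then show ?thesis by (simp only: sum_pair_snd fst_conv)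
  qed
  have "(H ** Kx ** cadj H) $ k $ l = (\<Sum>q\<in>UNIV. (if snd q = l then (H ** Kx) $ k $ q * cnj (hcb (fst q) l) else 0))"
    unfolding matrix_matrix_mult_def[of "H ** Kx"] cadj_def vec_lambda_beta
    by (intro sum.cong refl) (auto simp: H_def)
  also have "\<dots> = (\<Sum>j'\<in>UNIV. (H ** Kx) $ k $ (j',l) * cnj (hcb j' l))"
    by (simp only: sum_pair_snd fst_conv)
  also have "\<dots> = (\<Sum>j'\<in>UNIV. (\<Sum>j\<in>UNIV. hcb j k * Kx $ (j,k) $ (j',l)) * cnj (hcb j' l))"
    by (simp only: HK)
  also have "\<dots> = (\<Sum>j'\<in>UNIV. hcb j' k * K j' $ k $ l * cnj (hcb j' l))"
  proof (intro sum.cong refl)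
    fix j' :: 'j
    have "(\<Sum>j\<in>UNIV. hcb j k * Kx $ (j,k) $ (j',l)) = (\<Sum>j\<in>UNIV. if j = j' then hcb j k * K j $ k $ l else 0)"
      by (intro sum.cong refl) (simp add: Kx_def)
    also have "\<dots> = hcb j' k * K j' $ k $ l" by simp
    finally show "(\<Sum>j\<in>UNIV. hcb j k * Kx $ (j,k) $ (j',l)) * cnj (hcb j' l) = hcb j' k * K j' $ k $ l * cnj (hcb j' l)"
      by simp
  qed
  finally show ?thesis .
qed

lemma hip_G:
  fixes hcb :: "'j::finite \<Rightarrow> 'k::finite \<Rightarrow> complex" and K :: "'j \<Rightarrow> complex^'k^'k"
  assumes G: "\<And>k l. G $ k $ l = (\<Sum>j\<in>UNIV. hcb j k * K j $ k $ l * cnj (hcb j l))"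
  shows "hip x (G *v x) = (\<Sum>j\<in>UNIV. hip (\<chi> k. cnj (hcb j k) * x$k) (K j *v (\<chi> k. cnj (hcb j k) * x$k)))"
proof -
  define T where "T j k l = cnj (x$k) * hcb j k * K j $ k $ l * cnj (hcb j l) * x$l" for j k l
  have "hip x (G *v x) = (\<Sum>k\<in>UNIV. \<Sum>l\<in>UNIV. \<Sum>j\<in>UNIV. T j k l)"
    by (simp add: hip_def mv_component G T_def sum_distrib_left sum_distrib_right mult_ac)
  also have "\<dots> = (\<Sum>k\<in>UNIV. \<Sum>j\<in>UNIV. \<Sum>l\<in>UNIV. T j k l)"
    by (intro sum.cong refl) (rule sum.swap)
  also have "\<dots> = (\<Sum>j\<in>UNIV. \<Sum>k\<in>UNIV. \<Sum>l\<in>UNIV. T j k l)"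
    by (rule sum.swap)
  also have "\<dots> = (\<Sum>j\<in>UNIV. hip (\<chi> k. cnj (hcb j k) * x$k) (K j *v (\<chi> k. cnj (hcb j k) * x$k)))"
    by (simp add: hip_def mv_component T_def sum_distrib_left sum_distrib_right mult_ac)
  finally show ?thesis .
qed


theorem mainTheorem1:
  fixes b :: real and N0 :: real
    and hdb :: "'k::finite \<Rightarrow> complex" and P' :: "'k \<Rightarrow> real"
    and hcb :: "'j::finite \<Rightarrow> 'k \<Rightarrow> complex"
    and M1 M2 :: "'j \<Rightarrow> complex^'n::finite^'k"
    and a1 a2 :: "'j \<Rightarrow> 'n \<Rightarrow> real"
  assumes "b > 1"
    and "CARD('n) \<le> CARD('k)"
    and "N0 > 0"
    and "\<And>k. P' k \<ge> 0"
    and "\<And>j k. hcb j k \<noteq> 0"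
    and "\<And>j i. a1 j i \<ge> 0" and "\<And>j i. a2 j i \<ge> 0"
    and "\<not> (\<exists>v. is_eigvec
              (diagm (\<lambda>k. complex_of_real (N0 + (cmod (hdb k))\<^sup>2 * P' k))) v \<and>
            is_eigvec
              (let Kxj = (\<lambda>j. M1 j ** diagm (\<lambda>i. complex_of_real (a1 j i)) ** cadj (M1 j)
                             + M2 j ** diagm (\<lambda>i. complex_of_real (a2 j i)) ** cadj (M2 j));
                   H = (\<chi> k p. if k = snd p then hcb (fst p) k else 0) :: complex^('j \<times> 'k)^'k;
                   Kx = (\<chi> p q. if fst p = fst q then Kxj (fst p) $ snd p $ snd q else 0)
                          :: complex^('j \<times> 'k)^('j \<times> 'k)
               in H ** Kx ** cadj H) v)"
  shows
    "(let Ntil = (\<lambda>k. N0 + (cmod (hdb k))\<^sup>2 * P' k);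
          Kn = diagm (\<lambda>k. complex_of_real (Ntil k));
          Kxj = (\<lambda>j. M1 j ** diagm (\<lambda>i. complex_of_real (a1 j i)) ** cadj (M1 j)
                      + M2 j ** diagm (\<lambda>i. complex_of_real (a2 j i)) ** cadj (M2 j));
          H = (\<chi> k p. if k = snd p then hcb (fst p) k else 0) :: complex^('j \<times> 'k)^'k;
          Kx = (\<chi> p q. if fst p = fst q then Kxj (fst p) $ snd p $ snd q else 0)
                 :: complex^('j \<times> 'k)^('j \<times> 'k);
          Ky = Kn + H ** Kx ** cadj H;
          Cc = log b (Re (det Ky)) - (\<Sum>k\<in>UNIV. log b (Ntil k));
          tau = (\<lambda>j. lambda_max (M1 j ** diagm (\<lambda>i. complex_of_real (a1 j i)) ** cadj (M1 j))
                    + lambda_max (M2 j ** diagm (\<lambda>i. complex_of_real (a2 j i)) ** cadj (M2 j)))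
      in Cc < (\<Sum>k\<in>UNIV. log b (1 + (\<Sum>j\<in>UNIV. tau j * Max ((\<lambda>k'. (cmod (hcb j k'))\<^sup>2) ` UNIV))
                                        / (N0 + (cmod (hdb k))\<^sup>2 * P' k))))"
proof -
  define Ntil where "Ntil k = N0 + (cmod (hdb k))\<^sup>2 * P' k" for k
  define Kn where "Kn = diagm (\<lambda>k. complex_of_real (Ntil k))"
  define A1 where "A1 j = M1 j ** diagm (\<lambda>i. complex_of_real (a1 j i)) ** cadj (M1 j)" for j
  define A2 where "A2 j = M2 j ** diagm (\<lambda>i. complex_of_real (a2 j i)) ** cadj (M2 j)" for j
  define K where "K j = A1 j + A2 j" for j
  define H :: "complex^('j \<times> 'k)^'k" where "H = (\<chi> k p. if k = snd p then hcb (fst p) k else 0)"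
  define Kx :: "complex^('j \<times> 'k)^('j \<times> 'k)" where
    "Kx = (\<chi> p q. if fst p = fst q then K (fst p) $ snd p $ snd q else 0)"
  define G where "G = H ** Kx ** cadj H"
  define Ky where "Ky = Kn + G"
  define tau where "tau j = lambda_max (A1 j) + lambda_max (A2 j)" for j
  define mx where "mx j = Max ((\<lambda>k'. (cmod (hcb j k'))\<^sup>2) ` UNIV)" for j
  define c where "c = (\<Sum>j\<in>UNIV. tau j * mx j)"
  have hyp: "\<not> (\<exists>v. is_eigvec Kn v \<and> is_eigvec G v)"
    using assms(8) unfolding Let_def G_def H_def Kx_def K_def A1_def A2_def Kn_def Ntil_def .
  have Npos: "Ntil k > 0" for k
    using assms(3) assms(4)[of k] by (simp add: Ntil_def add_pos_nonneg)
  have hA1: "herm (A1 j)" for j unfolding A1_def by (rule herm_MDM)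
  have hA2: "herm (A2 j)" for j unfolding A2_def by (rule herm_MDM)
  have hK: "herm (K j)" for j unfolding K_def by (intro herm_add hA1 hA2)
  have psdA1: "Re (hip x (A1 j *v x)) \<ge> 0" for j x unfolding A1_def by (rule psd_MDM) (use assms(6) in auto)
  have psdA2: "Re (hip x (A2 j *v x)) \<ge> 0" for j x unfolding A2_def by (rule psd_MDM) (use assms(7) in auto)
  have psdK: "Re (hip x (K j *v x)) \<ge> 0" for j x
    using psdA1[of x j] psdA2[of x j] by (simp add: K_def matrix_vector_mult_add_rdistrib hip_add_right)
  have Gentry: "G $ k $ l = (\<Sum>j\<in>UNIV. hcb j k * K j $ k $ l * cnj (hcb j l))" for k l
    unfolding G_def H_def Kx_def by (rule G_entry)
  have Kcnj: "cnj (K j $ l $ k) = K j $ k $ l" for j k l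
  proof -
    have "cadj (K j) $ k $ l = K j $ k $ l" using hK[of j] by (simp add: herm_def)
    then show ?thesis by (simp add: cadj_def)
  qed
  have hG: "herm G"
  proof -
    have "cadj G $ k $ l = G $ k $ l" for k l
      by (simp add: cadj_def Gentry Kcnj mult_ac)
    then show ?thesis by (simp add: herm_def vec_eq_iff)
  qed
  have hKy: "herm Ky" unfolding Ky_def Kn_def
    by (intro herm_add hG) (simp add: herm_def cadj_diag_real)
  have psdG: "Re (hip x (G *v x)) \<ge> 0" for x
    unfolding hip_G[of G hcb K, OF Gentry] Re_sum by (intro sum_nonneg psdK)
  have pd: "Re (hip x (Ky *v x)) > 0" if x0: "x \<noteq> 0" for x
  proof -
    obtain i where xi: "x $ i \<noteq> 0" using x0 by (auto simp: vec_eq_iff)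
    have "Re (hip x (Kn *v x)) = (\<Sum>k\<in>UNIV. Ntil k * (cmod (x$k))^2)"
      unfolding Kn_def hip_diag by simp
    also have "\<dots> > 0"
    proof (rule sum_pos2[where i=i])
      show "0 < Ntil i * (cmod (x$i))^2" using xi Npos[of i] by simp
      show "0 \<le> Ntil j * (cmod (x$j))^2" if "j \<in> UNIV" for j using Npos[of j] by simp
    qed auto
    finally have "Re (hip x (Kn *v x)) > 0" .
    then show ?thesis using psdG[of x]
      by (simp add: Ky_def matrix_vector_mult_add_rdistrib hip_add_right)
  qed
  obtain k0 :: 'k where True by blast
  have offd: "\<exists>i. i \<noteq> k0 \<and> Ky $ i $ k0 \<noteq> 0"
  proof (rule ccontr)
    assume "\<not> (\<exists>i. i \<noteq> k0 \<and> Ky $ i $ k0 \<noteq> 0)"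
    then have z: "G $ i $ k0 = 0" if "i \<noteq> k0" for i
      using that by (auto simp: Ky_def Kn_def diagm_def)
    define e :: "complex^'k" where "e = axis k0 1"
    have e0: "e \<noteq> 0" by (simp add: e_def axis_def vec_eq_iff)
    have "Kn *v e = complex_of_real (Ntil k0) *s e"
      by (simp add: Kn_def diagm_mv e_def axis_def vec_eq_iff)
    then have "is_eigvec Kn e" using e0 by (auto simp: is_eigvec_def)
    moreover have "G *v e = G $ k0 $ k0 *s e"
    proof -
      have Ge: "(G *v e) $ i = G $ i $ k0" for i
        by (simp add: e_def mv_component axis_def if_distrib cong: if_cong)
      have "(G *v e) $ i = (G $ k0 $ k0 *s e) $ i" for i
        using z[of i] unfolding Ge by (cases "i = k0") (simp_all add: e_def axis_def)
      then show ?thesis by (simp add: vec_eq_iff)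
    qed
    then have "is_eigvec G e" using e0 by (auto simp: is_eigvec_def)
    ultimately show False using hyp by blast
  qed
  then obtain i where i: "i \<noteq> k0" "Ky $ i $ k0 \<noteq> 0" by blast
  have had: "Re (det Ky) > 0 \<and> Re (det Ky) < (\<Prod>k\<in>UNIV. Re (Ky $ k $ k))"
    using hadamard_strict[OF hKy pd i] by simp
  have Kdiag0: "Re (K j $ k $ k) \<ge> 0" for j k
    using psdK[of "axis k 1" j] by (simp add: hip_axis)
  have Kdiag_tau: "Re (K j $ k $ k) \<le> tau j" for j k
    using diag_le_lambda[OF hA1, of j k] diag_le_lambda[OF hA2, of j k]
    by (simp add: K_def tau_def)
  have tau0: "tau j \<ge> 0" for j using Kdiag0[of j k0] Kdiag_tau[of j k0] by linarith
  have hmx: "(cmod (hcb j k))^2 \<le> mx j" for j k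
    unfolding mx_def by (rule Max_ge) auto
  have mx0: "mx j \<ge> 0" for j using hmx[of j k0] by (meson order_trans zero_le_power2)
  have c0: "c \<ge> 0" unfolding c_def by (intro sum_nonneg mult_nonneg_nonneg tau0 mx0)
  have ReG: "Re (G $ k $ k) = (\<Sum>j\<in>UNIV. (cmod (hcb j k))^2 * Re (K j $ k $ k))" for k
  proof -
    have eqj: "hcb j k * K j $ k $ k * cnj (hcb j k) = complex_of_real ((cmod (hcb j k))^2) * K j $ k $ k" for j
      by (simp only: cnj_mult_self[symmetric]) (simp add: mult_ac)
    have "Re (complex_of_real r * z) = r * Re z" for r z by simp
    then show ?thesis unfolding Gentry eqj Re_sum by (simp del: of_real_power)
  qed
  have diag_lo: "Re (Ky $ k $ k) \<ge> Ntil k" for k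
  proof -
    have "Re (G $ k $ k) \<ge> 0" unfolding ReG by (intro sum_nonneg mult_nonneg_nonneg Kdiag0) simp
    then show ?thesis by (simp add: Ky_def Kn_def diagm_def)
  qed
  have diag_hi: "Re (Ky $ k $ k) \<le> Ntil k + c" for k
  proof -
    have "Re (G $ k $ k) \<le> c" unfolding ReG c_def
    proof (intro sum_mono)
      fix j
      have "(cmod (hcb j k))^2 * Re (K j $ k $ k) \<le> mx j * Re (K j $ k $ k)"
        by (intro mult_right_mono hmx Kdiag0)
      also have "\<dots> \<le> mx j * tau j" by (intro mult_left_mono Kdiag_tau mx0)
      finally show "(cmod (hcb j k))^2 * Re (K j $ k $ k) \<le> tau j * mx j" by (simp add: mult.commute)
    qed
    then show ?thesis by (simp add: Ky_def Kn_def diagm_def)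
  qed
  have prod_le: "(\<Prod>k\<in>UNIV. Re (Ky $ k $ k)) \<le> (\<Prod>k\<in>UNIV. Ntil k + c)"
  proof (intro prod_mono conjI diag_hi)
    show "0 \<le> Re (Ky $ k $ k)" for k using diag_lo[of k] Npos[of k] by linarith
  qed
  have pos2: "Ntil k + c > 0" for k using Npos[of k] c0 by linarith
  have b1: "b > 1" by (rule assms(1))
  have "log b (Re (det Ky)) < log b (\<Prod>k\<in>UNIV. Ntil k + c)"
    using had prod_le b1 pos2 by (subst log_less_cancel_iff) (auto intro: prod_pos)
  also have "log b (\<Prod>k\<in>UNIV. Ntil k + c) = (\<Sum>k\<in>UNIV. log b (Ntil k + c))"
  proof -
    have ne: "Ntil k + c \<noteq> 0" for k using pos2[of k] by linarith
    show ?thesis unfolding log_def by (subst ln_prod) (simp_all add: ne sum_divide_distrib)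
  qed
  finally have L1: "log b (Re (det Ky)) < (\<Sum>k\<in>UNIV. log b (Ntil k + c))" .
  have L2: "log b (Ntil k + c) - log b (Ntil k) = log b (1 + c / (N0 + (cmod (hdb k))\<^sup>2 * P' k))" for k
  proof -
    have "1 + c / (N0 + (cmod (hdb k))\<^sup>2 * P' k) = (Ntil k + c) / Ntil k"
      using Npos[of k] by (simp add: Ntil_def field_simps)
    then show ?thesis using Npos[of k] pos2[of k] by (simp add: log_divide_pos)
  qed
  have final: "log b (Re (det Ky)) - (\<Sum>k\<in>UNIV. log b (Ntil k))
      < (\<Sum>k\<in>UNIV. log b (1 + c / (N0 + (cmod (hdb k))\<^sup>2 * P' k)))"
  proof -
    have "(\<Sum>k\<in>UNIV. log b (1 + c / (N0 + (cmod (hdb k))\<^sup>2 * P' k)))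
        = (\<Sum>k\<in>UNIV. log b (Ntil k + c)) - (\<Sum>k\<in>UNIV. log b (Ntil k))"
      by (simp only: L2[symmetric] sum_subtractf)
    then show ?thesis using L1 by linarith
  qed
  then show ?thesis
    unfolding Let_def Ky_def G_def H_def Kx_def K_def A1_def A2_def Kn_def Ntil_def c_def tau_def mx_def .
qed

end
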